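(* Let $\lambda>0$, let $E_1,E_2,\ldots$ be i.i.d. $\text{Exp}(\lambda)$ random variables, and let $$X=\prod_{i=1}^{\infty}\min\left\{\sum_{k=1}^iE_k,1\right\}.$$ Then for every $\beta>-1$, $\mathbb{E}[X^{\beta}]=e^{-\frac{\beta\lambda}{1+\beta}}$. In particular, $\mathbb{E}[X]=e^{-\lambda/2}$ and $\mathrm{Var}(X)=e^{-2\lambda/3}-e^{-\lambda}$.
   Context: $\text{Exp}(\lambda)$ denotes the exponential distribution with rate $\lambda$ (mean $1/\lambda$). *)

theory Defs
  imports "HOL-Probability.Probability"
begin

text \<open>The partial products are non-increasing and in [0,1], so the limit always exists.\<close>
definition prod_min_partial_sums :: "(nat \<Rightarrow> 'a \<Rightarrow> real) \<Rightarrow> 'a \<Rightarrow> real" where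
  "prod_min_partial_sums E \<omega> = lim (\<lambda>n. \<Prod>i<n. min (\<Sum>k\<le>i. E k \<omega>) 1)"

end

theory Submission
  imports Defs
begin

definition W :: "(real \<Rightarrow> real) \<Rightarrow> nat \<Rightarrow> real \<Rightarrow> (nat \<Rightarrow> real) \<Rightarrow> ennreal" where
  "W g n s e = (\<Prod>i<n. if s + (\<Sum>j\<le>i. e j) \<le> 1 then ennreal (g (s + (\<Sum>j\<le>i. e j))) else 0)
      * (if 1 < s + (\<Sum>j\<le>n. e j) then 1 else 0)"

lemma W_cong: "(\<And>j. j \<le> n \<Longrightarrow> e j = e' j) \<Longrightarrow> W g n s e = W g n s e'"
  unfolding W_def
  by (intro arg_cong2[where f="(*)"] prod.cong sum.cong refl) auto

lemma W_Suc: "W g (Suc n) s e =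
   (if s + e 0 \<le> 1 then ennreal (g (s + e 0)) else 0) * W g n (s + e 0) (\<lambda>j. e (Suc j))"
  unfolding W_def prod.lessThan_Suc_shift sum.atMost_Suc_shift
  by (simp only: add.assoc mult.assoc) simp

lemma W_measurable:
  assumes g[measurable]: "g \<in> borel_measurable borel"
    and e: "\<And>j. j \<le> n \<Longrightarrow> (\<lambda>x. e x j) \<in> borel_measurable N"
  shows "(\<lambda>x. W g n s (e x)) \<in> borel_measurable N"
proof -
  define e' where "e' x j = (if j \<le> n then e x j else 0)" for x j
  have [measurable]: "(\<lambda>x. e' x j) \<in> borel_measurable N" for j
    unfolding e'_def using e by (cases "j \<le> n") auto
  have "(\<lambda>x. W g n s (e' x)) \<in> borel_measurable N"
    unfolding W_def by measurable
  moreover have "W g n s (e' x) = W g n s (e x)" for x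
    by (rule W_cong) (simp add: e'_def)
  ultimately show ?thesis by simp
qed

lemma comp_meas:
  assumes "i \<in> I" "sets N = sets borel"
  shows "(\<lambda>x. x i) \<in> borel_measurable (PiM I (\<lambda>_. N))"
proof -
  have "(\<lambda>x. x i) \<in> measurable (PiM I (\<lambda>_. N)) N"
    using measurable_component_singleton[OF assms(1), of "\<lambda>_. N"] by simp
  then show ?thesis using assms(2) measurable_cong_sets by blast
qed

lemma W_PiM:
  fixes l :: real and g G :: "real \<Rightarrow> real"
  assumes M: "prob_space M" and l: "l > 0" and Y: "distributed M lborel Y (exponential_density l)"
    and g[measurable]: "g \<in> borel_measurable borel" and gnn: "\<And>u. 0 \<le> g u"
    and Gc: "continuous_on {0..1} G"
    and Gd: "\<And>u. 0 < u \<Longrightarrow> u < 1 \<Longrightarrow> (G has_real_derivative g u) (at u)"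
    and Gm: "\<And>u. 0 \<le> u \<Longrightarrow> u \<le> 1 \<Longrightarrow> G u \<le> G 1"
  defines "D \<equiv> density lborel (exponential_density l)"
  shows "s \<in> {0..1} \<Longrightarrow> (\<integral>\<^sup>+x. W g n s (\<lambda>j. x (m+j)) \<partial>PiM {m..m+n} (\<lambda>_. D))
     = ennreal (exp (-l*(1-s)) * l^n * (G 1 - G s)^n / fact n)"
proof (induction n arbitrary: s m)
  interpret D: prob_space D unfolding D_def using prob_space_exponential_density[OF l] .
  interpret P: product_prob_space "\<lambda>_::nat. D"
    by (simp add: product_prob_space_def product_prob_space_axioms_def product_sigma_finite_def D.sigma_finite_measure D.prob_space_axioms)
  have setsD: "sets D = sets borel" unfolding D_def by simp
  case 0
  then have s: "0 \<le> s" "s \<le> 1" by auto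
  interpret MP: prob_space M by (rule M)
  have DY: "D = distr M lborel Y" unfolding D_def using distributed_distr_eq_density[OF Y] by simp
  have Ym[measurable]: "Y \<in> borel_measurable M" using distributed_measurable[OF Y] by simp
  have "(\<integral>\<^sup>+x. W g 0 s (\<lambda>j. x (m+j)) \<partial>PiM {m..m+0} (\<lambda>_. D))
      = (\<integral>\<^sup>+x. indicator {1-s<..} (x m) \<partial>PiM {m} (\<lambda>_. D))"
    by (simp only: add_0_right atLeastAtMost_singleton, intro nn_integral_cong) (auto simp: W_def indicator_def)
  also have "\<dots> = (\<integral>\<^sup>+y. indicator {1-s<..} y \<partial>D)"
    by (rule P.product_nn_integral_singleton) (simp add: measurable_cong_sets[OF setsD refl])
  also have "\<dots> = emeasure D {1-s<..}"
    by (simp add: setsD)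
  also have "\<dots> = emeasure M {x\<in>space M. 1 - s < Y x}"
    unfolding DY by (subst emeasure_distr) (auto simp: vimage_def Int_def conj_commute)
  also have "\<dots> = ennreal (exp (- (1-s) * l))"
    using MP.exponential_distributedD_gt[OF Y _ l, of "1-s"] s
    by (simp add: MP.emeasure_eq_measure)
  finally show ?case by (simp add: algebra_simps)
next
  interpret D: prob_space D unfolding D_def using prob_space_exponential_density[OF l] .
  interpret P: product_prob_space "\<lambda>_::nat. D"
    by (simp add: product_prob_space_def product_prob_space_axioms_def product_sigma_finite_def D.sigma_finite_measure D.prob_space_axioms)
  have setsD: "sets D = sets borel" unfolding D_def by simp
  case (Suc n)
  then have s: "0 \<le> s" "s \<le> 1" by auto
  define Gc' where "Gc' u = G (max 0 (min 1 u))" for u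
  have Gc'c: "continuous_on UNIV Gc'"
    unfolding Gc'_def by (rule continuous_on_compose2[OF Gc]) (auto intro!: continuous_intros)
  have Gc'm[measurable]: "Gc' \<in> borel_measurable borel"
    by (rule borel_measurable_continuous_onI[OF Gc'c])
  define K where "K = exp(-l*(1-s)) * l^(Suc n) / fact n"
  define h where "h y = K * (g (s+y) * (G 1 - G (s+y))^n)" for y
  define \<Phi> where "\<Phi> y = - K * (G 1 - G (s+y))^(Suc n) / Suc n" for y
  define c where "c y = (if s + y \<le> 1 then ennreal (g (s+y)) else 0)" for y
  define H where "H y = (if s + y \<le> 1 then ennreal (g (s+y) * (exp (-l*(1-(s+y))) * l^n * (G 1 - Gc' (s+y))^n / fact n)) else 0)" for y
  have Hm[measurable]: "H \<in> borel_measurable borel" unfolding H_def by measurable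
  have ins: "{m..m + Suc n} = insert m {Suc m..Suc m + n}" by auto
  have meas: "(\<lambda>x. W g (Suc n) s (\<lambda>j. x (m+j))) \<in> borel_measurable (PiM (insert m {Suc m..Suc m+n}) (\<lambda>_. D))"
    by (rule W_measurable[OF g]) (rule comp_meas[OF _ setsD], auto)
  have meas2: "(\<lambda>x. W g n s' (\<lambda>j. x (Suc m + j))) \<in> borel_measurable (PiM {Suc m..Suc m+n} (\<lambda>_. D))" for s'
    by (rule W_measurable[OF g]) (rule comp_meas[OF _ setsD], auto)
  have "(\<integral>\<^sup>+x. W g (Suc n) s (\<lambda>j. x (m+j)) \<partial>PiM {m..m+Suc n} (\<lambda>_. D))
     = (\<integral>\<^sup>+ y. \<integral>\<^sup>+ x. W g (Suc n) s (\<lambda>j. (x(m:=y)) (m+j)) \<partial>PiM {Suc m..Suc m+n} (\<lambda>_. D) \<partial>D)"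
    unfolding ins by (rule P.product_nn_integral_insert_rev[OF _ _ meas]) auto
  also have "\<dots> = (\<integral>\<^sup>+ y. c y * (\<integral>\<^sup>+ x. W g n (s+y) (\<lambda>j. x (Suc m + j)) \<partial>PiM {Suc m..Suc m+n} (\<lambda>_. D)) \<partial>D)"
  proof (intro nn_integral_cong)
    fix y
    have e: "W g (Suc n) s (\<lambda>j. (x(m:=y)) (m+j)) = c y * W g n (s+y) (\<lambda>j. x(Suc m+j))" for x
      by (simp add: W_Suc c_def)
    show "(\<integral>\<^sup>+ x. W g (Suc n) s (\<lambda>j. (x(m:=y)) (m+j)) \<partial>PiM {Suc m..Suc m+n} (\<lambda>_. D))
      = c y * (\<integral>\<^sup>+ x. W g n (s+y) (\<lambda>j. x (Suc m + j)) \<partial>PiM {Suc m..Suc m+n} (\<lambda>_. D))"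
      unfolding e by (rule nn_integral_cmult[OF meas2])
  qed
  also have "\<dots> = (\<integral>\<^sup>+ y. H y \<partial>D)"
  proof (rule nn_integral_cong_AE)
    have "AE y in D. 0 \<le> y" unfolding D_def
      by (subst AE_density) (auto simp: exponential_density_def)
    then show "AE y in D. c y * (\<integral>\<^sup>+ x. W g n (s+y) (\<lambda>j. x (Suc m + j)) \<partial>PiM {Suc m..Suc m+n} (\<lambda>_. D)) = H y"
    proof (eventually_elim)
      case (elim y)
      show ?case
      proof (cases "s + y \<le> 1")
        case True
        then have sy: "s + y \<in> {0..1}" using elim s by auto
        then have "Gc' (s+y) = G (s+y)" unfolding Gc'_def by simp
        moreover have "0 \<le> G 1 - G (s+y)" using Gm[of "s+y"] sy by auto
        ultimately show ?thesis using Suc.IH[OF sy, of "Suc m"] True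
          by (simp add: c_def H_def ennreal_mult'[symmetric] gnn)
      next
        case False then show ?thesis by (simp add: c_def H_def)
      qed
    qed
  qed
  also have "\<dots> = (\<integral>\<^sup>+ y. ennreal (exponential_density l y) * H y \<partial>lborel)"
    unfolding D_def by (rule nn_integral_density) auto
  also have "\<dots> = (\<integral>\<^sup>+ y. ennreal (h y) * indicator {0..1-s} y \<partial>lborel)"
  proof (intro nn_integral_cong)
    fix y :: real
    show "ennreal (exponential_density l y) * H y = ennreal (h y) * indicator {0..1-s} y"
    proof (cases "0 \<le> y \<and> s + y \<le> 1")
      case True
      then have sy: "s + y \<in> {0..1}" using s by auto
      then have Geq: "Gc' (s+y) = G (s+y)" unfolding Gc'_def by simp
      have eexp: "exp (- y * l) * exp (-l*(1-(s+y))) = exp(-l*(1-s))"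
        by (simp add: exp_add[symmetric] algebra_simps)
      have A: "l * exp (-y*l) * (g(s+y) * (exp(-l*(1-(s+y))) * l^n * (G 1 - G(s+y))^n / fact n)) = h y"
        unfolding h_def K_def eexp[symmetric] by (simp add: field_simps)
      have "ennreal (exponential_density l y) * H y
          = ennreal (l * exp (-y*l) * (g(s+y) * (exp(-l*(1-(s+y))) * l^n * (G 1 - G(s+y))^n / fact n)))"
        using True l by (simp add: H_def Geq exponential_density_def ennreal_mult'[symmetric])
      then show ?thesis using True s unfolding A by (simp add: indicator_def)
    next
      case False then show ?thesis
        by (auto simp: H_def exponential_density_def indicator_def)
    qed
  qed
  also have "\<dots> = ennreal (\<Phi> (1-s) - \<Phi> 0)"
  proof (rule nn_integral_has_integral_lebesgue')
    show "0 \<le> h y" if "y \<in> {0..1-s}" for y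
    proof -
      have "0 \<le> G 1 - G (s+y)" using Gm[of "s+y"] that s by auto
      then show ?thesis unfolding h_def K_def using l gnn[of "s+y"] by simp
    qed
    have cG: "continuous_on {0..1-s} (\<lambda>y. G (s+y))"
      by (rule continuous_on_compose2[OF Gc]) (auto intro!: continuous_intros simp: s)
    show "(h has_integral \<Phi> (1 - s) - \<Phi> 0) {0..1 - s}"
    proof (rule fundamental_theorem_of_calculus_interior)
      show "0 \<le> 1 - s" using s by simp
      show "continuous_on {0..1 - s} \<Phi>"
        unfolding \<Phi>_def by (intro continuous_intros cG) auto
      fix y assume y: "y \<in> {0<..<1-s}"
      have dG: "((\<lambda>y. G (s+y)) has_real_derivative g (s+y) * 1) (at y)"
        by (rule DERIV_chain2[OF Gd]) (use y s in \<open>auto intro!: derivative_eq_intros\<close>)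
      have "(\<Phi> has_real_derivative h y) (at y)"
        unfolding \<Phi>_def h_def
        by (rule derivative_eq_intros dG refl | simp)+
      then show "(\<Phi> has_vector_derivative h y) (at y)"
        by (simp add: has_real_derivative_iff_has_vector_derivative)
    qed
  qed
  also have "\<Phi> (1-s) - \<Phi> 0 = exp (-l*(1-s)) * l^Suc n * (G 1 - G s)^Suc n / fact (Suc n)"
    unfolding \<Phi>_def K_def by (simp add: field_simps)
  finally show ?case .
qed


lemma W_M:
  fixes l :: real and g G :: "real \<Rightarrow> real" and E :: "nat \<Rightarrow> 'a \<Rightarrow> real"
  assumes M: "prob_space M" and l: "l > 0"
    and ind: "prob_space.indep_vars M (\<lambda>_. borel) E UNIV"
    and Ed: "\<And>i. distributed M lborel (E i) (exponential_density l)"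
    and g[measurable]: "g \<in> borel_measurable borel" and gnn: "\<And>u. 0 \<le> g u"
    and Gc: "continuous_on {0..1} G"
    and Gd: "\<And>u. 0 < u \<Longrightarrow> u < 1 \<Longrightarrow> (G has_real_derivative g u) (at u)"
    and Gm: "\<And>u. 0 \<le> u \<Longrightarrow> u \<le> 1 \<Longrightarrow> G u \<le> G 1"
  shows "(\<integral>\<^sup>+\<omega>. W g n 0 (\<lambda>j. E j \<omega>) \<partial>M) = ennreal (exp (-l) * l^n * (G 1 - G 0)^n / fact n)"
proof -
  interpret prob_space M by (rule M)
  define D where "D = density lborel (exponential_density l)"
  have rv[measurable]: "E i \<in> borel_measurable M" for i
    using distributed_measurable[OF Ed[of i]] by simp
  have ind': "indep_vars (\<lambda>_. borel) E {0..n}"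
    by (rule indep_vars_subset[OF ind]) auto
  have eq: "distr M (PiM {0..n} (\<lambda>_. borel)) (\<lambda>x. \<lambda>i\<in>{0..n}. E i x) = PiM {0..n} (\<lambda>i. distr M borel (E i))"
    by (rule indep_vars_iff_distr_eq_PiM[THEN iffD1, OF _ _ ind']) auto
  have dD: "distr M borel (E i) = D" for i
  proof -
    have "distr M borel (E i) = distr M lborel (E i)" by (rule distr_cong) auto
    also have "\<dots> = D" unfolding D_def by (rule distributed_distr_eq_density[OF Ed])
    finally show ?thesis .
  qed
  have Vm: "(\<lambda>x. \<lambda>i\<in>{0..n}. E i x) \<in> measurable M (PiM {0..n} (\<lambda>_. borel))"
    by (rule measurable_restrict) simp
  have Wm: "(\<lambda>x. W g n 0 x) \<in> borel_measurable (PiM {0..n} (\<lambda>_. borel))"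
    using W_measurable[OF g, of n "\<lambda>x. x" "PiM {0..n} (\<lambda>_. borel)" 0] comp_meas[of _ "{0..n}" borel]
    by auto
  have "(\<integral>\<^sup>+\<omega>. W g n 0 (\<lambda>j. E j \<omega>) \<partial>M) = (\<integral>\<^sup>+\<omega>. W g n 0 (\<lambda>i\<in>{0..n}. E i \<omega>) \<partial>M)"
    by (intro nn_integral_cong W_cong) auto
  also have "\<dots> = (\<integral>\<^sup>+x. W g n 0 x \<partial>distr M (PiM {0..n} (\<lambda>_. borel)) (\<lambda>x. \<lambda>i\<in>{0..n}. E i x))"
    by (rule nn_integral_distr[OF Vm, symmetric]) (simp add: Wm)
  also have "\<dots> = (\<integral>\<^sup>+x. W g n 0 (\<lambda>j. x (0+j)) \<partial>PiM {0..0+n} (\<lambda>_. D))"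
    unfolding eq dD by simp
  also have "\<dots> = ennreal (exp (-l*(1-0)) * l^n * (G 1 - G 0)^n / fact n)"
    unfolding D_def by (rule W_PiM[OF M l Ed[of 0] g gnn Gc Gd Gm]) auto
  finally show ?thesis by simp
qed


lemma psum_mono:
  fixes e :: "nat \<Rightarrow> real"
  assumes "\<And>j. 0 \<le> e j" "i \<le> k"
  shows "(\<Sum>j\<le>i. e j) \<le> (\<Sum>j\<le>k. e j)"
  by (rule sum_mono2) (use assms in auto)

lemma W_sum_point:
  fixes e :: "nat \<Rightarrow> real"
  assumes nn: "\<And>j. 0 \<le> e j" and ex: "\<exists>n. 1 < (\<Sum>j\<le>n. e j)"
  defines "N \<equiv> LEAST n. 1 < (\<Sum>j\<le>n. e j)"
  shows "(\<Sum>n. W g n 0 e) = (\<Prod>i<N. ennreal (g (\<Sum>j\<le>i. e j)))"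
    and "(\<lambda>k. \<Prod>i<k. min (\<Sum>j\<le>i. e j) 1) \<longlonglongrightarrow> (\<Prod>i<N. (\<Sum>j\<le>i. e j))"
proof -
  have N1: "1 < (\<Sum>j\<le>N. e j)" unfolding N_def using ex by (metis LeastI)
  have lt: "(\<Sum>j\<le>i. e j) \<le> 1" if "i < N" for i
    using not_less_Least[of i "\<lambda>n. 1 < (\<Sum>j\<le>n. e j)"] that unfolding N_def by simp
  have gt: "1 < (\<Sum>j\<le>i. e j)" if "N \<le> i" for i
    using N1 psum_mono[of e N i, OF nn that] by simp
  have z: "W g n 0 e = 0" if "n \<noteq> N" for n
  proof (cases "n < N")
    case True then show ?thesis using lt[OF True] by (simp add: W_def)
  next
    case False
    then have "N < n" using that by simp
    then have "(\<Prod>i<n. if 0 + (\<Sum>j\<le>i. e j) \<le> 1 then ennreal (g (0 + (\<Sum>j\<le>i. e j))) else 0) = 0"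
      using N1 by (intro prod_zero) (auto intro!: bexI[of _ N])
    then show ?thesis by (simp add: W_def)
  qed
  have "(\<Sum>n. W g n 0 e) = (\<Sum>n\<in>{N}. W g n 0 e)"
    by (rule suminf_finite) (use z in auto)
  also have "\<dots> = (\<Prod>i<N. ennreal (g (\<Sum>j\<le>i. e j)))"
    using N1 lt by (simp add: W_def)
  finally show "(\<Sum>n. W g n 0 e) = (\<Prod>i<N. ennreal (g (\<Sum>j\<le>i. e j)))" .
  have "eventually (\<lambda>k. (\<Prod>i<k. min (\<Sum>j\<le>i. e j) 1) = (\<Prod>i<N. (\<Sum>j\<le>i. e j))) sequentially"
    unfolding eventually_sequentially
  proof (intro exI allI impI)
    fix k assume k: "N \<le> k"
    have "(\<Prod>i<k. min (\<Sum>j\<le>i. e j) 1) = (\<Prod>i<N. min (\<Sum>j\<le>i. e j) 1) * (\<Prod>i\<in>{N..<k}. min (\<Sum>j\<le>i. e j) 1)"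
      using prod.atLeastLessThan_concat[of 0 N k "\<lambda>i. min (\<Sum>j\<le>i. e j) 1"] k by (simp add: atLeast0LessThan)
    also have "(\<Prod>i\<in>{N..<k}. min (\<Sum>j\<le>i. e j) 1) = 1"
      using gt by (intro prod.neutral) auto
    also have "(\<Prod>i<N. min (\<Sum>j\<le>i. e j) 1) = (\<Prod>i<N. (\<Sum>j\<le>i. e j))"
      using lt by (intro prod.cong) auto
    finally show "(\<Prod>i<k. min (\<Sum>j\<le>i. e j) 1) = (\<Prod>i<N. (\<Sum>j\<le>i. e j))" by simp
  qed
  then show "(\<lambda>k. \<Prod>i<k. min (\<Sum>j\<le>i. e j) 1) \<longlonglongrightarrow> (\<Prod>i<N. (\<Sum>j\<le>i. e j))"
    by (rule tendsto_eventually)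
qed

lemma W_sum_none:
  fixes e :: "nat \<Rightarrow> real"
  assumes "\<forall>n. (\<Sum>j\<le>n. e j) \<le> 1"
  shows "(\<Sum>n. W g n 0 e) = 0"
proof -
  have "W g n 0 e = 0" for n using assms[rule_format, of n] by (simp add: W_def not_less)
  then show ?thesis by simp
qed


lemma sum_exp:
  fixes l c :: real
  assumes "0 < l" "0 \<le> c"
  shows "(\<Sum>n. ennreal (exp (-l) * l^n * c^n / fact n)) = ennreal (exp (-l) * exp (l*c))"
proof -
  have "(\<lambda>n. (l*c)^n /\<^sub>R fact n) sums exp (l*c)" by (rule exp_converges)
  then have "(\<lambda>n. exp (-l) * ((l*c)^n /\<^sub>R fact n)) sums (exp (-l) * exp (l*c))" by (rule sums_mult)
  moreover have "exp (-l) * ((l*c)^n /\<^sub>R fact n) = exp (-l) * l^n * c^n / fact n" for n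
    by (simp add: power_mult_distrib divide_inverse_commute)
  ultimately have su: "(\<lambda>n. exp (-l) * l^n * c^n / fact n) sums (exp (-l) * exp (l*c))" by simp
  have "(\<Sum>n. ennreal (exp (-l) * l^n * c^n / fact n)) = ennreal (\<Sum>n. exp (-l) * l^n * c^n / fact n)"
    by (rule suminf_ennreal2) (use assms su in \<open>auto simp: sums_iff\<close>)
  also have "\<dots> = ennreal (exp (-l) * exp (l*c))" using su by (simp add: sums_iff)
  finally show ?thesis .
qed

lemma W_M_sum:
  fixes l :: real and g G :: "real \<Rightarrow> real" and E :: "nat \<Rightarrow> 'a \<Rightarrow> real"
  assumes M: "prob_space M" and l: "l > 0"
    and ind: "prob_space.indep_vars M (\<lambda>_. borel) E UNIV"
    and Ed: "\<And>i. distributed M lborel (E i) (exponential_density l)"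
    and g[measurable]: "g \<in> borel_measurable borel" and gnn: "\<And>u. 0 \<le> g u"
    and Gc: "continuous_on {0..1} G"
    and Gd: "\<And>u. 0 < u \<Longrightarrow> u < 1 \<Longrightarrow> (G has_real_derivative g u) (at u)"
    and Gm: "\<And>u. 0 \<le> u \<Longrightarrow> u \<le> 1 \<Longrightarrow> G u \<le> G 1"
  shows "(\<integral>\<^sup>+\<omega>. (\<Sum>n. W g n 0 (\<lambda>j. E j \<omega>)) \<partial>M) = ennreal (exp (-l) * exp (l * (G 1 - G 0)))"
proof -
  have rv[measurable]: "E i \<in> borel_measurable M" for i
    using distributed_measurable[OF Ed[of i]] by simp
  have "(\<integral>\<^sup>+\<omega>. (\<Sum>n. W g n 0 (\<lambda>j. E j \<omega>)) \<partial>M) = (\<Sum>n. \<integral>\<^sup>+\<omega>. W g n 0 (\<lambda>j. E j \<omega>) \<partial>M)"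
    by (rule nn_integral_suminf) (rule W_measurable[OF g], simp)
  also have "\<dots> = (\<Sum>n. ennreal (exp (-l) * l^n * (G 1 - G 0)^n / fact n))"
    by (simp only: W_M[OF assms])
  also have "\<dots> = ennreal (exp (-l) * exp (l * (G 1 - G 0)))"
    by (rule sum_exp) (use l Gm[of 0] in auto)
  finally show ?thesis .
qed


theorem corollary1:
  fixes M :: "'a measure" and E :: "nat \<Rightarrow> 'a \<Rightarrow> real" and l :: real
  assumes "prob_space M"
    and "l > 0"
    and "prob_space.indep_vars M (\<lambda>_. borel) E UNIV"
    and "\<And>i. distributed M lborel (E i) (exponential_density l)"
  defines "X \<equiv> prod_min_partial_sums E"
  shows "(\<forall>\<beta>::real. \<beta> > -1 \<longrightarrow>
            prob_space.expectation M (\<lambda>\<omega>. X \<omega> powr \<beta>) = exp (- (\<beta> * l) / (1 + \<beta>)))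
       \<and> prob_space.expectation M X = exp (- l / 2)
       \<and> prob_space.variance M X = exp (- 2 * l / 3) - exp (- l)"
proof -
  note M = assms(1) and l = assms(2) and ind = assms(3) and Ed = assms(4)
  interpret prob_space M by (rule M)
  have rv[measurable]: "E i \<in> borel_measurable M" for i
    using distributed_measurable[OF Ed[of i]] by simp
  have Xm[measurable]: "X \<in> borel_measurable M"
    unfolding X_def prod_min_partial_sums_def[abs_def] by measurable
  have nn: "AE \<omega> in M. \<forall>j. 0 \<le> E j \<omega>"
  proof (subst AE_all_countable, intro allI)
    fix j
    have "prob {\<omega>\<in>space M. 0 < E j \<omega>} = 1"
      using exponential_distributedD_gt[OF Ed[of j] _ l, of 0] by simp
    then have "AE \<omega> in M. \<omega> \<in> {\<omega>\<in>space M. 0 < E j \<omega>}"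
      by (subst AE_in_set_eq_1) auto
    then show "AE \<omega> in M. 0 \<le> E j \<omega>" by eventually_elim auto
  qed
  define A where "A = {\<omega>\<in>space M. \<exists>n. 1 < (\<Sum>j\<le>n. E j \<omega>)}"
  have A[measurable]: "A \<in> sets M" unfolding A_def by measurable
  have div: "AE \<omega> in M. \<exists>n. 1 < (\<Sum>j\<le>n. E j \<omega>)"
  proof -
    have "AE \<omega> in M. (\<Sum>n. W (\<lambda>_. 1) n 0 (\<lambda>j. E j \<omega>)) = indicator A \<omega>"
      using AE_space nn
    proof (eventually_elim)
      case (elim \<omega>)
      show ?case
      proof (cases "\<exists>n. 1 < (\<Sum>j\<le>n. E j \<omega>)")
        case True
        then show ?thesis using W_sum_point(1)[of "\<lambda>j. E j \<omega>", OF elim(2)[rule_format] True, of "\<lambda>_. 1"] elim(1)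
          by (simp add: A_def indicator_def)
      next
        case False
        then show ?thesis using W_sum_none[of "\<lambda>j. E j \<omega>" "\<lambda>_. 1"]
          by (auto simp: A_def not_less indicator_def)
      qed
    qed
    then have ae: "AE \<omega> in M. indicator A \<omega> = (\<Sum>n. W (\<lambda>_. 1) n 0 (\<lambda>j. E j \<omega>))"
      by eventually_elim simp
    have "emeasure M A = (\<integral>\<^sup>+\<omega>. indicator A \<omega> \<partial>M)" by simp
    also have "\<dots> = (\<integral>\<^sup>+\<omega>. (\<Sum>n. W (\<lambda>_. 1) n 0 (\<lambda>j. E j \<omega>)) \<partial>M)"
      by (rule nn_integral_cong_AE[OF ae])
    also have "\<dots> = ennreal (exp (-l) * exp (l * (1 - 0)))"
      by (rule W_M_sum[OF M l ind Ed, of "\<lambda>_. 1" "\<lambda>u. u"]) (auto intro!: derivative_eq_intros continuous_intros)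
    finally have "prob A = 1" by (simp add: emeasure_eq_measure exp_minus field_simps)
    then have "AE \<omega> in M. \<omega> \<in> A" by (subst AE_in_set_eq_1) auto
    then show ?thesis by eventually_elim (auto simp: A_def)
  qed
  have Xform: "AE \<omega> in M. (\<forall>j. 0 \<le> E j \<omega>) \<and> (\<exists>N. X \<omega> = (\<Prod>i<N. (\<Sum>j\<le>i. E j \<omega>)) \<and>
       (\<forall>g. (\<Sum>n. W g n 0 (\<lambda>j. E j \<omega>)) = (\<Prod>i<N. ennreal (g (\<Sum>j\<le>i. E j \<omega>)))))"
    using nn div
  proof eventually_elim
    case (elim \<omega>)
    define N where "N = (LEAST n. 1 < (\<Sum>j\<le>n. E j \<omega>))"
    have "X \<omega> = (\<Prod>i<N. (\<Sum>j\<le>i. E j \<omega>))"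
      unfolding X_def prod_min_partial_sums_def N_def
      by (rule limI, rule W_sum_point(2)) (use elim in auto)
    moreover have "(\<Sum>n. W g n 0 (\<lambda>j. E j \<omega>)) = (\<Prod>i<N. ennreal (g (\<Sum>j\<le>i. E j \<omega>)))" for g
      unfolding N_def by (rule W_sum_point(1)) (use elim in auto)
    ultimately show ?case using elim by blast
  qed
  have Xnn: "AE \<omega> in M. 0 \<le> X \<omega>"
    using Xform by eventually_elim (auto intro!: prod_nonneg sum_nonneg)
  have key: "(\<integral>\<^sup>+\<omega>. ennreal (X \<omega> powr \<beta>) \<partial>M) = ennreal (exp (- (\<beta> * l) / (1 + \<beta>)))"
    if b: "\<beta> > -1" for \<beta> :: real
  proof -
    define g where "g u = u powr \<beta>" for u :: real
    define G where "G u = u powr (1+\<beta>) / (1+\<beta>)" for u :: real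
    have gm: "g \<in> borel_measurable borel" unfolding g_def by measurable
    have gnn: "0 \<le> g u" for u unfolding g_def by simp
    have Gc: "continuous_on {0..1} G"
      unfolding G_def
      by (intro continuous_intros continuous_on_powr') (use b in auto)
    have Gd: "(G has_real_derivative g u) (at u)" if "0 < u" "u < 1" for u
    proof -
      have "((\<lambda>u. u powr (1+\<beta>)) has_real_derivative (1+\<beta>) * u powr (1+\<beta>-1)) (at u)"
        by (rule has_real_derivative_powr) (use that in auto)
      then have "((\<lambda>u. u powr (1+\<beta>) / (1+\<beta>)) has_real_derivative (1+\<beta>) * u powr (1+\<beta>-1) / (1+\<beta>)) (at u)"
        by (rule DERIV_cdivide)
      moreover have "(1+\<beta>) * u powr (1+\<beta>-1) / (1+\<beta>) = g u" using b by (simp add: g_def)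
      ultimately show ?thesis unfolding G_def by simp
    qed
    have Gm: "G u \<le> G 1" if "0 \<le> u" "u \<le> 1" for u
    proof -
      have "u powr (1+\<beta>) \<le> 1 powr (1+\<beta>)" by (rule powr_mono2) (use that b in auto)
      then show ?thesis unfolding G_def using b by (simp add: divide_right_mono)
    qed
    have "AE \<omega> in M. ennreal (X \<omega> powr \<beta>) = (\<Sum>n. W g n 0 (\<lambda>j. E j \<omega>))"
      using Xform
    proof eventually_elim
      case (elim \<omega>)
      then obtain N where N: "X \<omega> = (\<Prod>i<N. (\<Sum>j\<le>i. E j \<omega>))"
        "(\<Sum>n. W g n 0 (\<lambda>j. E j \<omega>)) = (\<Prod>i<N. ennreal (g (\<Sum>j\<le>i. E j \<omega>)))" by blast
      show ?case unfolding N g_def prod_powr_distrib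
        by (simp add: prod_ennreal)
    qed
    then have "(\<integral>\<^sup>+\<omega>. ennreal (X \<omega> powr \<beta>) \<partial>M) = (\<integral>\<^sup>+\<omega>. (\<Sum>n. W g n 0 (\<lambda>j. E j \<omega>)) \<partial>M)"
      by (rule nn_integral_cong_AE)
    also have "\<dots> = ennreal (exp (-l) * exp (l * (G 1 - G 0)))"
      by (rule W_M_sum[OF M l ind Ed gm gnn Gc Gd Gm])
    also have "exp (-l) * exp (l * (G 1 - G 0)) = exp (- (\<beta> * l) / (1 + \<beta>))"
    proof -
      have "G 1 - G 0 = 1 / (1+\<beta>)" unfolding G_def using b by simp
      moreover have "-l + l * (1/(1+\<beta>)) = - (\<beta> * l) / (1 + \<beta>)" using b by (simp add: field_simps)
      ultimately show ?thesis by (simp add: exp_add[symmetric])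
    qed
    finally show ?thesis .
  qed
  have powm: "(\<lambda>\<omega>. X \<omega> powr \<beta>) \<in> borel_measurable M" for \<beta> by measurable
  have int: "integrable M (\<lambda>\<omega>. X \<omega> powr \<beta>)" if "\<beta> > -1" for \<beta>
    by (rule integrableI_nonneg) (use key[OF that] in \<open>auto simp: powm\<close>)
  have Epow: "expectation (\<lambda>\<omega>. X \<omega> powr \<beta>) = exp (- (\<beta> * l) / (1 + \<beta>))" if "\<beta> > -1" for \<beta>
    by (subst integral_eq_nn_integral) (use key[OF that] in \<open>auto simp: powm\<close>)
  have ae1: "AE \<omega> in M. X \<omega> powr 1 = X \<omega>" using Xnn by eventually_elim simp
  have ae2: "AE \<omega> in M. X \<omega> powr 2 = (X \<omega>)\<^sup>2" using Xnn by eventually_elim simp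
  have EX: "expectation X = exp (- l / 2)"
  proof -
    have "expectation X = expectation (\<lambda>\<omega>. X \<omega> powr 1)"
      by (rule integral_cong_AE) (use ae1 powm in auto)
    also have "\<dots> = exp (- l / 2)" using Epow[of 1] by simp
    finally show ?thesis .
  qed
  have intX: "integrable M X"
    using integrable_cong_AE[OF powm[of 1] Xm ae1] int[of 1] by simp
  have X2m: "(\<lambda>\<omega>. (X \<omega>)\<^sup>2) \<in> borel_measurable M" by measurable
  have intX2: "integrable M (\<lambda>\<omega>. (X \<omega>)\<^sup>2)"
    using integrable_cong_AE[OF powm[of 2] X2m ae2] int[of 2] by simp
  have EX2: "expectation (\<lambda>\<omega>. (X \<omega>)\<^sup>2) = exp (- 2 * l / 3)"
  proof -
    have "expectation (\<lambda>\<omega>. (X \<omega>)\<^sup>2) = expectation (\<lambda>\<omega>. X \<omega> powr 2)"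
      by (rule integral_cong_AE) (use ae2 powm X2m in auto)
    also have "\<dots> = exp (- 2 * l / 3)" using Epow[of 2] by simp
    finally show ?thesis .
  qed
  have sq: "(exp (- l / 2))\<^sup>2 = exp (- l)"
    by (simp add: power2_eq_square mult_exp_exp)
  have "variance X = expectation (\<lambda>\<omega>. (X \<omega>)\<^sup>2) - (expectation X)\<^sup>2"
    by (rule variance_eq[OF intX intX2])
  also have "\<dots> = exp (- 2 * l / 3) - exp (- l)"
    by (simp only: EX2 EX sq)
  finally have "variance X = exp (- 2 * l / 3) - exp (- l)" .
  then show ?thesis using Epow EX by auto
qed

end
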